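(* Assume either that $g$ satisfies A1–A4, or that $(g,\mathfrak{D})$ satisfy B1–B4, and that $\mathbb{P}$ satisfies C1. Then: (1) for every $L>0$ and $n$, with probability at least $1-\Lambda_n(L)$ the map $D\mapsto F_X(D)$ is $L$-Lipschitz on $\mathfrak{D}$ with respect to $\|\cdot\|_{1\to2}$; (2) if $L>L_{\mathbb{P}}(\bar g)$ and there is a sequence $(\gamma_n)$ with $\gamma_n\to0$ and $\Gamma_n(\gamma_n)\to0$ as $n\to\infty$, then $D\mapsto\mathbb{E}_{x\sim\mathbb{P}}f_x(D)$ is $L$-Lipschitz on $\mathfrak{D}$ with respect to $\|\cdot\|_{1\to2}$.
   Context: A penalty is $g:\mathbb{R}^d\to\mathbb{R}\cup\{+\infty\}$; $\mathfrak{D}\subset\mathbb{R}^{m\times d}$. $\mathcal{L}_x(D,\alpha)=\tfrac12\|x-D\alpha\|_2^2+g(\alpha)$, $f_x(D)=\inf_\alpha\mathcal{L}_x(D,\alpha)$, $F_X(D)=\frac1n\sum_i f_{x_i}(D)$. $\|\Delta\|_{1\to2}=\max_j\|\delta_j\|_2$. A1: $g\ge0$; A2: $g$ lower semi-continuous; A3: $g(\alpha)\to+\infty$ as $\|\alpha\|\to\infty$; A4: $g(0)=0$. B1: $g=\chi_{\mathcal K}$ (indicator of $\mathcal K$); B2: there is $\kappa>0$ with $\kappa\|\alpha\|_1^2\le\|D\alpha\|_2^2$ for $\alpha\in\mathcal K$, $D\in\mathfrak{D}$; B3: $0\in\mathcal K$; B4: $\mathfrak{D}$ convex. $\bar g(t)=\sup\{\|\alpha\|_1:g(\alpha)\le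 t\}$ under A1–A4, $\bar g(t)=2\sqrt{2t/\kappa}$ under B1–B4. $L_X(\bar g)=\frac1n\sum_i\|x_i\|_2\bar g(\|x_i\|_2^2/2)$. $\mathbb{P}$ is a distribution on $\mathbb{R}^m$, $x_1,\dots,x_n$ i.i.d. $\sim\mathbb{P}$, $X=[x_1,\dots,x_n]$. $L_{\mathbb{P}}(\bar g)=\mathbb{E}\|x\|_2\bar g(\|x\|_2^2/2)$; C1: $L_{\mathbb{P}}(\bar g)<\infty$. $\Lambda_n(L)=\mathbb{P}(L_X(\bar g)>L)$, $\Gamma_n(\gamma)=\sup_{D\in\mathfrak{D}}\mathbb{P}(|F_X(D)-\mathbb{E}f_x(D)|>\gamma)$. *)

theory Defs
  imports "HOL-Analysis.Analysis" "HOL-Probability.Probability"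
begin

text \<open>Signals x live in real^'m, codes alpha in real^'d,
  dictionaries D :: real^'d^'m (m x d matrices, D *v alpha in real^'m).\<close>

definition l1norm :: "real^'d \<Rightarrow> real" where
  "l1norm a = (\<Sum>j\<in>UNIV. \<bar>a $ j\<bar>)"

definition norm12 :: "real^'d^'m \<Rightarrow> real" where
  "norm12 M = Max (range (\<lambda>j. norm (column j M)))"

definition lsc :: "('a::topological_space \<Rightarrow> ereal) \<Rightarrow> bool" where
  "lsc g \<longleftrightarrow> (\<forall>a. g a \<le> Liminf (at a) g)"

definition cost :: "(real^'d \<Rightarrow> ereal) \<Rightarrow> real^'m \<Rightarrow> real^'d^'m \<Rightarrow> real^'d \<Rightarrow> ereal" where
  "cost g x D a = ereal ((1/2) * (norm (x - D *v a))\<^sup>2) + g a"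

text \<open>f_x(D) = inf_alpha L_x(D,alpha); under the standing assumptions (g >= 0, g 0 = 0)
  this infimum lies in [0, ||x||^2/2], so we take its real value.\<close>
definition fx :: "(real^'d \<Rightarrow> ereal) \<Rightarrow> real^'m \<Rightarrow> real^'d^'m \<Rightarrow> real" where
  "fx g x D = real_of_ereal (INF a. cost g x D a)"

definition FX :: "(real^'d \<Rightarrow> ereal) \<Rightarrow> nat \<Rightarrow> (nat \<Rightarrow> real^'m) \<Rightarrow> real^'d^'m \<Rightarrow> real" where
  "FX g n X D = (1 / real n) * (\<Sum>i<n. fx g (X i) D)"

definition assmA :: "(real^'d \<Rightarrow> ereal) \<Rightarrow> bool" where
  "assmA g \<longleftrightarrow> (\<forall>a. g a \<ge> 0) \<and> lsc g \<and> (g \<longlongrightarrow> \<infinity>) at_infinity \<and> g 0 = 0"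

definition indicator_ext :: "'a set \<Rightarrow> 'a \<Rightarrow> ereal" where
  "indicator_ext K a = (if a \<in> K then 0 else \<infinity>)"

definition assmB :: "(real^'d \<Rightarrow> ereal) \<Rightarrow> (real^'d^'m) set \<Rightarrow> real \<Rightarrow> bool" where
  "assmB g DD \<kappa> \<longleftrightarrow> (\<exists>K. g = indicator_ext K
      \<and> \<kappa> > 0 \<and> (\<forall>a\<in>K. \<forall>D\<in>DD. \<kappa> * (l1norm a)\<^sup>2 \<le> (norm (D *v a))\<^sup>2)
      \<and> 0 \<in> K \<and> convex DD)"

definition gbarA :: "(real^'d \<Rightarrow> ereal) \<Rightarrow> real \<Rightarrow> real" where
  "gbarA g t = Sup {l1norm a | a. g a \<le> ereal t}"

definition gbarB :: "real \<Rightarrow> real \<Rightarrow> real" where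
  "gbarB \<kappa> t = 2 * sqrt (2 * t / \<kappa>)"

definition LX :: "(real \<Rightarrow> real) \<Rightarrow> nat \<Rightarrow> (nat \<Rightarrow> real^'m) \<Rightarrow> real" where
  "LX gb n X = (1 / real n) * (\<Sum>i<n. norm (X i) * gb ((norm (X i))\<^sup>2 / 2))"

definition lipschitz_12 :: "(real^'d^'m) set \<Rightarrow> real \<Rightarrow> (real^'d^'m \<Rightarrow> real) \<Rightarrow> bool" where
  "lipschitz_12 DD L F \<longleftrightarrow> (\<forall>D\<in>DD. \<forall>D'\<in>DD. \<bar>F D - F D'\<bar> \<le> L * norm12 (D - D'))"

abbreviation sampleM :: "nat \<Rightarrow> 'a measure \<Rightarrow> (nat \<Rightarrow> 'a) measure" where
  "sampleM n P \<equiv> PiM {..<n} (\<lambda>_. P)"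

definition Lambda_n :: "(real^'m) measure \<Rightarrow> (real \<Rightarrow> real) \<Rightarrow> nat \<Rightarrow> real \<Rightarrow> real" where
  "Lambda_n P gb n L = measure (sampleM n P) {X \<in> space (sampleM n P). LX gb n X > L}"

definition Ef :: "(real^'m) measure \<Rightarrow> (real^'d \<Rightarrow> ereal) \<Rightarrow> real^'d^'m \<Rightarrow> real" where
  "Ef P g D = (\<integral>x. fx g x D \<partial>P)"

definition Gamma_n :: "(real^'m) measure \<Rightarrow> (real^'d \<Rightarrow> ereal) \<Rightarrow> (real^'d^'m) set \<Rightarrow> nat \<Rightarrow> real \<Rightarrow> real" where
  "Gamma_n P g DD n \<gamma> = (SUP D\<in>DD. measure (sampleM n P)
      {X \<in> space (sampleM n P). \<bar>FX g n X D - Ef P g D\<bar> > \<gamma>})"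

definition LPnn :: "(real^'m) measure \<Rightarrow> (real \<Rightarrow> real) \<Rightarrow> ennreal" where
  "LPnn P gb = (\<integral>\<^sup>+x. ennreal (norm x * gb ((norm x)\<^sup>2 / 2)) \<partial>P)"

end

theory Submission
  imports Defs
begin

lemma mvR: "(c *\<^sub>R (A::real^'n^'m)) *v x = c *\<^sub>R (A *v x)"
  unfolding vec_eq_iff matrix_vector_mult_def
  by (simp add: sum_distrib_left mult.assoc)

lemma norm_mv_le: "norm (M *v a) \<le> l1norm a * norm12 M"
proof -
  have "norm (M *v a) = norm (\<Sum>i\<in>UNIV. a $ i *s column i M)" by (simp add: matrix_mult_sum)
  also have "\<dots> \<le> (\<Sum>i\<in>UNIV. norm (a $ i *s column i M))" by (rule norm_sum)
  also have "\<dots> \<le> (\<Sum>i\<in>UNIV. \<bar>a $ i\<bar> * norm12 M)"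
  proof (rule sum_mono)
    fix i
    have "norm (column i M) \<le> norm12 M" unfolding norm12_def by (rule Max_ge) auto
    then show "norm (a $ i *s column i M) \<le> \<bar>a $ i\<bar> * norm12 M"
      by (simp add: scalar_mult_eq_scaleR mult_left_mono)
  qed
  finally show ?thesis by (simp add: l1norm_def sum_distrib_right)
qed

lemma norm12_nonneg: "0 \<le> norm12 M"
proof -
  obtain j :: 'a where True by auto
  have "norm (column j M) \<le> norm12 M" unfolding norm12_def by (rule Max_ge) auto
  then show ?thesis by (meson norm_ge_zero order_trans)
qed

lemma cost_nonneg: "\<forall>a. g a \<ge> 0 \<Longrightarrow> cost g x D a \<ge> 0"
  unfolding cost_def by (simp add: add_nonneg_nonneg)

lemma cost0: "g 0 = 0 \<Longrightarrow> cost g x D 0 = ereal ((1/2) * (norm x)\<^sup>2)"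
  unfolding cost_def by simp

lemma fx_props:
  assumes g0: "\<forall>a. g a \<ge> 0" "g 0 = 0"
  shows "ereal (fx g x D) = (INF a. cost g x D a)" "0 \<le> fx g x D" "fx g x D \<le> (1/2) * (norm x)\<^sup>2"
proof -
  let ?I = "(INF a. cost g x D a)"
  have lo: "0 \<le> ?I" by (rule INF_greatest) (simp add: cost_nonneg g0)
  have c0: "cost g x D 0 = ereal ((1/2) * (norm x)\<^sup>2)" using g0(2) by (rule cost0)
  have hi: "?I \<le> ereal ((1/2) * (norm x)\<^sup>2)" using INF_lower[of 0 UNIV "cost g x D"] unfolding c0 by simp
  obtain r where r: "?I = ereal r" using lo hi by (cases ?I) auto
  show "ereal (fx g x D) = ?I" unfolding fx_def r by simp
  show "0 \<le> fx g x D" using lo r unfolding fx_def by simp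
  show "fx g x D \<le> (1/2) * (norm x)\<^sup>2" using hi r unfolding fx_def by simp
qed


lemma fx_shift:
  assumes g0: "\<forall>a. g a \<ge> 0" "g 0 = 0"
    and B: "\<And>a. cost g x D a \<le> ereal ((1/2) * (norm x)\<^sup>2) \<Longrightarrow> norm ((x' - D' *v a) - (x - D *v a)) \<le> B"
  shows "fx g x' D' \<le> fx g x D + norm x * B + (1/2) * B\<^sup>2"
proof (rule field_le_epsilon)
  fix e :: real assume e: "0 < e"
  let ?f = "fx g x D"
  have I: "(INF a. cost g x D a) < ereal (?f + e)"
  proof -
    have "ereal ?f < ereal (?f + e)" using e by simp
    then show ?thesis using fx_props(1)[OF g0, of x D] by simp
  qed
  then obtain a0 where a0: "cost g x D a0 < ereal (?f + e)" by (auto simp: INF_less_iff)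
  have c0: "cost g x D 0 = ereal ((1/2) * (norm x)\<^sup>2)" using g0(2) by (rule cost0)
  define a where "a = (if cost g x D a0 \<le> ereal ((1/2) * (norm x)\<^sup>2) then a0 else 0)"
  have alt: "cost g x D a < ereal (?f + e)" and ahi: "cost g x D a \<le> ereal ((1/2) * (norm x)\<^sup>2)"
  proof -
    have "cost g x D 0 < ereal (?f + e)" if "\<not> cost g x D a0 \<le> ereal ((1/2) * (norm x)\<^sup>2)"
      using that a0 c0 by (metis linorder_not_le order.strict_trans)
    then show "cost g x D a < ereal (?f + e)" "cost g x D a \<le> ereal ((1/2) * (norm x)\<^sup>2)"
      using a0 c0 unfolding a_def by auto
  qed
  have "g a \<noteq> \<infinity>" using alt unfolding cost_def by auto
  then obtain r where r: "g a = ereal r" "0 \<le> r" using g0(1)[rule_format, of a] by (cases "g a") auto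
  define w where "w = x - D *v a"
  define v where "v = (x' - D' *v a) - w"
  have costa: "cost g x D a = ereal ((1/2) * (norm w)\<^sup>2 + r)" unfolding cost_def w_def r by simp
  have h1: "(1/2) * (norm w)\<^sup>2 + r < ?f + e" using alt costa by simp
  have h2: "(1/2) * (norm w)\<^sup>2 + r \<le> (1/2) * (norm x)\<^sup>2" using ahi costa by simp
  have "(norm (w))\<^sup>2 \<le> (norm x)\<^sup>2" using h2 r(2) by linarith
  have wx: "norm w \<le> norm x" by (rule power2_le_imp_le) (use \<open>(norm (w))\<^sup>2 \<le> (norm x)\<^sup>2\<close> in simp_all)
  have vB: "norm v \<le> B" using B[OF ahi] unfolding v_def w_def .
  have "(norm (w + v))\<^sup>2 \<le> (norm w + norm v)\<^sup>2"
    by (simp add: norm_triangle_ineq power_mono)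
  also have "\<dots> = (norm w)\<^sup>2 + 2 * (norm w * norm v) + (norm v)\<^sup>2" by (simp add: power2_eq_square algebra_simps)
  also have "\<dots> \<le> (norm w)\<^sup>2 + 2 * (norm x * B) + B\<^sup>2"
    using mult_mono[OF wx vB] power_mono[OF vB] by (smt (verit) norm_ge_zero)
  finally have wv: "(norm (w + v))\<^sup>2 \<le> (norm w)\<^sup>2 + 2 * (norm x * B) + B\<^sup>2" .
  have "ereal (fx g x' D') = (INF a. cost g x' D' a)" using fx_props(1)[OF g0] .
  also have "\<dots> \<le> cost g x' D' a" by (rule INF_lower) simp
  also have "\<dots> = ereal ((1/2) * (norm (w + v))\<^sup>2 + r)" unfolding cost_def v_def r by simp
  finally have "fx g x' D' \<le> (1/2) * (norm (w + v))\<^sup>2 + r" by simp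
  then show "fx g x' D' \<le> fx g x D + norm x * B + (1/2) * B\<^sup>2 + e"
    using wv h1 by linarith
qed


lemma subdiv:
  fixes h :: "real \<Rightarrow> real"
  assumes H: "\<And>s t. s \<in> {0..1} \<Longrightarrow> t \<in> {0..1} \<Longrightarrow> h t - h s \<le> a * \<bar>t - s\<bar> + b * (t - s)\<^sup>2"
    and b: "b \<ge> 0"
  shows "h 1 - h 0 \<le> a"
proof -
  have N: "h 1 - h 0 \<le> a + b / real N" if N: "N \<ge> 1" for N :: nat
  proof -
    have "h 1 - h 0 = (\<Sum>k<N. h (real (Suc k) / N) - h (real k / N))"
      using N by (subst sum_lessThan_telescope) simp
    also have "\<dots> \<le> (\<Sum>k<N. a * (1 / N) + b * (1 / N)\<^sup>2)"
    proof (rule sum_mono)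
      fix k assume "k \<in> {..<N}"
      then have k: "k < N" by simp
      have "real (Suc k) / N - real k / N = 1 / N" by (simp add: diff_divide_distrib[symmetric])
      moreover have "real (Suc k) / N \<in> {0..1}" "real k / N \<in> {0..1}" using k N by auto
      ultimately show "h (real (Suc k) / N) - h (real k / N) \<le> a * (1 / N) + b * (1 / N)\<^sup>2"
        using H[of "real k / N" "real (Suc k) / N"] by simp
    qed
    also have "\<dots> = a + b / real N" using N by (simp add: power2_eq_square field_simps)
    finally show ?thesis .
  qed
  show ?thesis
  proof (rule ccontr)
    assume "\<not> ?thesis"
    then have d: "h 1 - h 0 - a > 0" by simp
    define \<delta> where "\<delta> = h 1 - h 0 - a"
    obtain N :: nat where Nb: "N > b / \<delta>" using reals_Archimedean2 by blast
    have "b / \<delta> \<ge> 0" using b d \<delta>_def by simp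
    then have Npos: "real N > 0" using Nb by linarith
    then have N1: "N \<ge> 1" by simp
    have "b < N * \<delta>" using Nb d \<delta>_def by (simp add: divide_less_eq mult.commute)
    then have "b / N < \<delta>" using Npos by (simp add: divide_less_eq mult.commute)
    then have "b / N < h 1 - h 0 - a" using \<delta>_def by simp
    then show False using N[OF N1] by simp
  qed
qed


definition good :: "(real^'d \<Rightarrow> ereal) \<Rightarrow> real^'m \<Rightarrow> real^'d^'m \<Rightarrow> real \<Rightarrow> bool" where
  "good g x D G \<longleftrightarrow> (\<forall>a. cost g x D a \<le> ereal ((1/2) * (norm x)\<^sup>2) \<longrightarrow> l1norm a \<le> G)"

lemma fx_step:
  assumes g0: "\<forall>a. g a \<ge> 0" "g 0 = 0"
    and gd: "good g x (D + s *\<^sub>R \<Delta>) G"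
  shows "fx g x (D + t *\<^sub>R \<Delta>) - fx g x (D + s *\<^sub>R \<Delta>)
     \<le> (norm x * G * norm12 \<Delta>) * \<bar>t - s\<bar> + ((1/2) * G\<^sup>2 * (norm12 \<Delta>)\<^sup>2) * (t - s)\<^sup>2"
proof -
  have "fx g x (D + t *\<^sub>R \<Delta>) \<le> fx g x (D + s *\<^sub>R \<Delta>) + norm x * (\<bar>t - s\<bar> * G * norm12 \<Delta>)
       + (1/2) * (\<bar>t - s\<bar> * G * norm12 \<Delta>)\<^sup>2"
  proof (rule fx_shift[OF g0])
    fix a assume "cost g x (D + s *\<^sub>R \<Delta>) a \<le> ereal ((1/2) * (norm x)\<^sup>2)"
    then have l: "l1norm a \<le> G" using gd unfolding good_def by blast
    have "(x - (D + t *\<^sub>R \<Delta>) *v a) - (x - (D + s *\<^sub>R \<Delta>) *v a) = (s - t) *\<^sub>R (\<Delta> *v a)"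
      by (simp add: matrix_vector_mult_add_rdistrib mvR algebra_simps)
    then have "norm ((x - (D + t *\<^sub>R \<Delta>) *v a) - (x - (D + s *\<^sub>R \<Delta>) *v a)) = \<bar>t - s\<bar> * norm (\<Delta> *v a)"
      by (simp add: abs_minus_commute)
    also have "\<dots> \<le> \<bar>t - s\<bar> * (l1norm a * norm12 \<Delta>)"
      by (rule mult_left_mono[OF norm_mv_le]) simp
    also have "\<dots> \<le> \<bar>t - s\<bar> * (G * norm12 \<Delta>)"
      by (intro mult_left_mono mult_right_mono l norm12_nonneg) simp
    finally show "norm ((x - (D + t *\<^sub>R \<Delta>) *v a) - (x - (D + s *\<^sub>R \<Delta>) *v a)) \<le> \<bar>t - s\<bar> * G * norm12 \<Delta>"
      by (simp add: mult.assoc)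
  qed
  then show ?thesis by (simp add: power_mult_distrib power2_abs algebra_simps)
qed

lemma fx_lip_seg:
  assumes g0: "\<forall>a. g a \<ge> 0" "g 0 = 0"
    and gd: "\<And>t. t \<in> {0..1} \<Longrightarrow> good g x (D + t *\<^sub>R \<Delta>) G"
  shows "\<bar>fx g x (D + \<Delta>) - fx g x D\<bar> \<le> norm x * G * norm12 \<Delta>"
proof -
  define h where "h t = fx g x (D + t *\<^sub>R \<Delta>)" for t
  define a where "a = norm x * G * norm12 \<Delta>"
  define b where "b = (1/2) * G\<^sup>2 * (norm12 \<Delta>)\<^sup>2"
  have b: "b \<ge> 0" unfolding b_def by simp
  have H: "h t - h s \<le> a * \<bar>t - s\<bar> + b * (t - s)\<^sup>2" if "s \<in> {0..1}" for s t
    unfolding h_def a_def b_def by (rule fx_step[OF g0 gd[OF that]])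
  have 1: "h 1 - h 0 \<le> a" by (rule subdiv[OF H b])
  have 2: "(\<lambda>t. h (1 - t)) 1 - (\<lambda>t. h (1 - t)) 0 \<le> a"
  proof (rule subdiv[OF _ b])
    fix s t :: real assume "s \<in> {0..1}" "t \<in> {0..1}"
    then have "1 - s \<in> {0..1}" by auto
    from H[OF this, of "1 - t"] show "h (1 - t) - h (1 - s) \<le> a * \<bar>t - s\<bar> + b * (t - s)\<^sup>2"
      by (simp add: abs_minus_commute power2_commute)
  qed
  from 1 2 show ?thesis unfolding h_def a_def by simp
qed


lemma hyp_g0:
  assumes hyp: "(assmA g \<and> gb = gbarA g) \<or> (assmB g DD \<kappa> \<and> gb = gbarB \<kappa>)"
  shows "\<forall>a. g a \<ge> 0" "g 0 = 0"
  using hyp unfolding assmA_def assmB_def indicator_ext_def by auto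

lemma l1_le: "l1norm (a::real^'d) \<le> real CARD('d) * norm a"
proof -
  have "l1norm a \<le> (\<Sum>j\<in>(UNIV::'d set). norm a)" unfolding l1norm_def
    by (rule sum_mono) (rule component_le_norm_cart)
  then show ?thesis by simp
qed

lemma l1_nonneg: "0 \<le> l1norm a"
  unfolding l1norm_def by (simp add: sum_nonneg)

lemma gbarA_props:
  fixes g :: "real^'d \<Rightarrow> ereal"
  assumes A: "assmA g" and t: "t \<ge> 0"
  shows "bdd_above {l1norm a | a. g a \<le> ereal t}" "0 \<le> gbarA g t"
    "g a \<le> ereal t \<Longrightarrow> l1norm a \<le> gbarA g t"
proof -
  have lim: "(g \<longlongrightarrow> \<infinity>) at_infinity" using A unfolding assmA_def by blast
  then have "eventually (\<lambda>a. g a > ereal t) at_infinity" by (simp add: tendsto_PInfty)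
  then obtain r where r: "\<And>a. norm a \<ge> r \<Longrightarrow> g a > ereal t" by (auto simp: eventually_at_infinity)
  show bdd: "bdd_above {l1norm a | a. g a \<le> ereal t}"
  proof (rule bdd_aboveI)
    fix y assume "y \<in> {l1norm a | a. g a \<le> ereal t}"
    then obtain a where y: "y = l1norm a" and ga: "g a \<le> ereal t" by auto
    have "norm a < r"
    proof (rule ccontr)
      assume "\<not> norm a < r"
      then have "g a > ereal t" using r by simp
      then show False using ga by simp
    qed
    then have "real CARD('d) * norm a \<le> real CARD('d) * r" by (intro mult_left_mono) simp_all
    then show "y \<le> real CARD('d) * r" using l1_le[of a] y by linarith
  qed
  have "g 0 = 0" using A unfolding assmA_def by blast
  then have mem: "l1norm (0::real^'d) \<in> {l1norm a | a. g a \<le> ereal t}" using t by auto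
  have "l1norm (0::real^'d) = 0" unfolding l1norm_def by simp
  then show "0 \<le> gbarA g t" unfolding gbarA_def using cSup_upper[OF mem bdd] by simp
  assume "g a \<le> ereal t"
  then have mem2: "l1norm a \<in> {l1norm a | a. g a \<le> ereal t}" by auto
  show "l1norm a \<le> gbarA g t" unfolding gbarA_def by (rule cSup_upper[OF mem2 bdd])
qed

lemma cost_half_imp:
  assumes g0: "\<forall>a. g a \<ge> 0" and c: "cost g x D a \<le> ereal ((1/2) * (norm x)\<^sup>2)"
  shows "g a \<le> ereal ((norm x)\<^sup>2 / 2)" "norm (x - D *v a) \<le> norm x"
proof -
  have "g a \<noteq> \<infinity>" using c unfolding cost_def by auto
  then obtain r where r: "g a = ereal r" "0 \<le> r" using g0[rule_format, of a] by (cases "g a") auto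
  have h: "(1/2) * (norm (x - D *v a))\<^sup>2 + r \<le> (1/2) * (norm x)\<^sup>2" using c unfolding cost_def r by simp
  have "0 \<le> (norm (x - D *v a))\<^sup>2" by simp
  then have "r \<le> (norm x)\<^sup>2 / 2" using h by linarith
  then show "g a \<le> ereal ((norm x)\<^sup>2 / 2)" using r by simp
  have "(norm (x - D *v a))\<^sup>2 \<le> (norm x)\<^sup>2" using h r(2) by linarith
  show "norm (x - D *v a) \<le> norm x" by (rule power2_le_imp_le) (use \<open>(norm (x - D *v a))\<^sup>2 \<le> (norm x)\<^sup>2\<close> in simp_all)
qed

lemma goodA: assumes A: "assmA g" shows "good g x D (gbarA g ((norm x)\<^sup>2 / 2))"
  unfolding good_def
proof (intro allI impI)
  fix a assume "cost g x D a \<le> ereal ((1/2) * (norm x)\<^sup>2)"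
  then have "g a \<le> ereal ((norm x)\<^sup>2 / 2)" using cost_half_imp A unfolding assmA_def by blast
  then show "l1norm a \<le> gbarA g ((norm x)\<^sup>2 / 2)" using gbarA_props(3)[OF A, of "(norm x)\<^sup>2 / 2" a] by simp
qed

lemma goodB: assumes B: "assmB g DD \<kappa>" and D: "D \<in> DD" shows "good g x D (gbarB \<kappa> ((norm x)\<^sup>2 / 2))"
  unfolding good_def
proof (intro allI impI)
  fix a assume c: "cost g x D a \<le> ereal ((1/2) * (norm x)\<^sup>2)"
  obtain K where K: "g = indicator_ext K" "\<kappa> > 0" "\<forall>a\<in>K. \<forall>D\<in>DD. \<kappa> * (l1norm a)\<^sup>2 \<le> (norm (D *v a))\<^sup>2"
    using B unfolding assmB_def by blast
  have g0: "\<forall>a. g a \<ge> 0" using K(1) unfolding indicator_ext_def by auto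
  have "g a \<noteq> \<infinity>" using c unfolding cost_def by auto
  then have aK: "a \<in> K" using K(1) unfolding indicator_ext_def by (auto split: if_splits)
  have "norm (x - D *v a) \<le> norm x" using cost_half_imp(2)[OF g0 c] .
  then have Da: "norm (D *v a) \<le> 2 * norm x" using norm_triangle_ineq4[of x "x - D *v a"] by simp
  have "\<kappa> * (l1norm a)\<^sup>2 \<le> (norm (D *v a))\<^sup>2" using K(3) aK D by blast
  also have "\<dots> \<le> (2 * norm x)\<^sup>2" by (rule power_mono[OF Da]) simp
  finally have "(l1norm a)\<^sup>2 \<le> (2 * norm x)\<^sup>2 / \<kappa>" using K(2) by (simp add: field_simps)
  then have "l1norm a \<le> sqrt ((2 * norm x)\<^sup>2 / \<kappa>)" by (metis l1_nonneg real_le_rsqrt)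
  also have "\<dots> = gbarB \<kappa> ((norm x)\<^sup>2 / 2)" unfolding gbarB_def
    by (simp add: real_sqrt_divide real_sqrt_mult power_mult_distrib)
  finally show "l1norm a \<le> gbarB \<kappa> ((norm x)\<^sup>2 / 2)" .
qed

lemma fx_lip:
  assumes hyp: "(assmA g \<and> gb = gbarA g) \<or> (assmB g DD \<kappa> \<and> gb = gbarB \<kappa>)"
    and D: "D \<in> DD" "D' \<in> DD"
  shows "\<bar>fx g x D - fx g x D'\<bar> \<le> norm x * gb ((norm x)\<^sup>2 / 2) * norm12 (D - D')"
proof -
  have gd: "good g x (D' + t *\<^sub>R (D - D')) (gb ((norm x)\<^sup>2 / 2))" if t: "t \<in> {0..1}" for t
    using hyp
  proof
    assume "assmA g \<and> gb = gbarA g" then show ?thesis using goodA by blast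
  next
    assume B: "assmB g DD \<kappa> \<and> gb = gbarB \<kappa>"
    then have "convex DD" unfolding assmB_def by blast
    then have "(1 - t) *\<^sub>R D' + t *\<^sub>R D \<in> DD" using D t unfolding convex_def by auto
    moreover have "(1 - t) *\<^sub>R D' + t *\<^sub>R D = D' + t *\<^sub>R (D - D')" by (simp add: algebra_simps)
    ultimately show ?thesis using goodB B by metis
  qed
  have "\<bar>fx g x (D' + (D - D')) - fx g x D'\<bar> \<le> norm x * gb ((norm x)\<^sup>2 / 2) * norm12 (D - D')"
    by (rule fx_lip_seg[OF hyp_g0[OF hyp] gd])
  then show ?thesis by simp
qed


lemma fx_cont:
  assumes g0: "\<forall>a. g a \<ge> 0" "g 0 = 0"
  shows "continuous_on UNIV (\<lambda>x. fx g x D)"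
proof -
  have up: "fx g y D - fx g x D \<le> norm x * norm (y - x) + (1/2) * (norm (y - x))\<^sup>2" for x y
  proof -
    have "fx g y D \<le> fx g x D + norm x * norm (y - x) + (1/2) * (norm (y - x))\<^sup>2"
      by (rule fx_shift[OF g0]) simp
    then show ?thesis by simp
  qed
  have "isCont (\<lambda>x. fx g x D) x" for x
  proof -
    define k where "k y = (norm x + norm (y - x)) * norm (y - x) + (1/2) * (norm (y - x))\<^sup>2" for y
    have kc: "isCont k x" unfolding k_def by (intro continuous_intros)
    have "(k \<longlongrightarrow> k x) (at x)" using kc by (simp add: isCont_def)
    then have k0: "(k \<longlongrightarrow> 0) (at x)" unfolding k_def by simp
    have bnd: "norm (fx g y D - fx g x D) \<le> k y" for y
    proof -
      have a: "fx g y D - fx g x D \<le> k y" using up[of y x] unfolding k_def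
        by (smt (verit) mult_right_mono norm_ge_zero)
      have "fx g x D - fx g y D \<le> norm y * norm (x - y) + (1/2) * (norm (x - y))\<^sup>2" by (rule up)
      moreover have "norm y \<le> norm x + norm (y - x)" by (metis add.commute diff_add_cancel norm_triangle_ineq)
      moreover have "norm (x - y) = norm (y - x)" by (rule norm_minus_commute)
      ultimately have b: "fx g x D - fx g y D \<le> k y" unfolding k_def
        by (smt (verit) mult_right_mono norm_ge_zero)
      from a b show ?thesis by simp
    qed
    have "((\<lambda>y. fx g y D - fx g x D) \<longlongrightarrow> 0) (at x)"
      by (rule Lim_null_comparison[OF _ k0], rule always_eventually) (use bnd in simp)
    then have "((\<lambda>y. fx g y D) \<longlongrightarrow> fx g x D) (at x)" by (simp add: LIM_zero_iff)
    then show ?thesis by (simp add: isCont_def)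
  qed
  then show ?thesis by (simp add: continuous_at_imp_continuous_on)
qed

lemma gb_nonneg:
  assumes hyp: "(assmA g \<and> gb = gbarA g) \<or> (assmB g DD \<kappa> \<and> gb = gbarB \<kappa>)" and t: "t \<ge> 0"
  shows "0 \<le> gb t"
  using hyp
proof
  assume "assmA g \<and> gb = gbarA g" then show ?thesis using gbarA_props(2) t by blast
next
  assume B: "assmB g DD \<kappa> \<and> gb = gbarB \<kappa>"
  then have "\<kappa> > 0" unfolding assmB_def by blast
  then show ?thesis using B t unfolding gbarB_def by simp
qed

lemma c_meas:
  assumes hyp: "(assmA g \<and> gb = gbarA g) \<or> (assmB g DD \<kappa> \<and> gb = gbarB \<kappa>)"
  shows "(\<lambda>x::real^'m. norm x * gb ((norm x)\<^sup>2 / 2)) \<in> borel_measurable borel"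
  using hyp
proof
  assume A: "assmA g \<and> gb = gbarA g"
  define gb' where "gb' t = gb (max t 0)" for t
  have "mono gb'"
  proof (rule monoI)
    fix s t :: real assume st: "s \<le> t"
    let ?S = "{l1norm a | a. g a \<le> ereal (max s 0)}" and ?T = "{l1norm a | a. g a \<le> ereal (max t 0)}"
    have "g 0 = 0" using A unfolding assmA_def by blast
    then have "g 0 \<le> ereal (max s 0)" by (simp add: le_max_iff_disj)
    then have "\<exists>a. g a \<le> ereal (max s 0)" by (rule exI)
    then have "?S \<noteq> {}" by blast
    moreover have "bdd_above ?T" by (rule gbarA_props(1)) (use A in auto)
    moreover have "?S \<subseteq> ?T"
    proof
      fix y assume "y \<in> ?S"
      then obtain a where a: "y = l1norm a" "g a \<le> ereal (max s 0)" by blast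
      have "max s 0 \<le> max t 0" using st by (simp add: max_def)
      then have "ereal (max s 0) \<le> ereal (max t 0)" by (simp only: ereal_less_eq(3))
      then have "g a \<le> ereal (max t 0)" using a(2) by (rule order_trans[rotated])
      then show "y \<in> ?T" using a(1) by blast
    qed
    ultimately have le: "Sup ?S \<le> Sup ?T" by (rule cSup_subset_mono)
    have gbe: "gb = gbarA g" using A by blast
    show "gb' s \<le> gb' t" unfolding gb'_def gbe gbarA_def by (rule le)
  qed
  then have m: "gb' \<in> borel_measurable borel" by (rule borel_measurable_mono)
  have eq: "(\<lambda>x::real^'m. norm x * gb ((norm x)\<^sup>2 / 2)) = (\<lambda>x. norm x * gb' ((norm x)\<^sup>2 / 2))"
    unfolding gb'_def by simp
  show ?thesis unfolding eq by (intro borel_measurable_times borel_measurable_norm measurable_compose[OF _ m]) measurable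
next
  assume "assmB g DD \<kappa> \<and> gb = gbarB \<kappa>"
  then have gbe: "gb = gbarB \<kappa>" by blast
  show ?thesis unfolding gbe gbarB_def by measurable
qed


lemma int_transfer:
  fixes u w c :: "'a \<Rightarrow> real"
  assumes u: "integrable M u" and w: "w \<in> borel_measurable M" and c: "integrable M c"
    and b: "\<And>x. \<bar>u x - w x\<bar> \<le> c x * k"
  shows "integrable M w"
proof -
  have d: "integrable M (\<lambda>x. u x - w x)"
  proof (rule Bochner_Integration.integrable_bound[of _ "\<lambda>x. c x * k"])
    show "integrable M (\<lambda>x. c x * k)" using c by simp
    show "(\<lambda>x. u x - w x) \<in> borel_measurable M" using u w by measurable
    show "AE x in M. norm (u x - w x) \<le> norm (c x * k)" using b by (auto intro!: always_eventually) (smt (verit) b)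
  qed
  have i: "integrable M (\<lambda>x. u x - (u x - w x))" by (rule Bochner_Integration.integrable_diff[OF u d])
  have eq: "w = (\<lambda>x. u x - (u x - w x))" by simp
  show ?thesis by (subst eq) (rule i)
qed

theorem mainTheorem11:
  fixes g :: "real^'d \<Rightarrow> ereal" and DD :: "(real^'d^'m) set" and \<kappa> :: real
    and gb :: "real \<Rightarrow> real" and P :: "(real^'m) measure"
  assumes hyp: "(assmA g \<and> gb = gbarA g) \<or> (assmB g DD \<kappa> \<and> gb = gbarB \<kappa>)"
    and P: "prob_space P" "sets P = sets borel"
    and C1: "LPnn P gb < \<infinity>"
  shows "(\<forall>L>0. \<forall>n. \<exists>E\<in>sets (sampleM n P).
            E \<subseteq> {X \<in> space (sampleM n P). lipschitz_12 DD L (FX g n X)}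
            \<and> measure (sampleM n P) E \<ge> 1 - Lambda_n P gb n L)
       \<and> (\<forall>L. L > enn2real (LPnn P gb) \<longrightarrow>
            (\<exists>\<gamma>::nat \<Rightarrow> real. \<gamma> \<longlonglongrightarrow> 0 \<and> (\<lambda>n. Gamma_n P g DD n (\<gamma> n)) \<longlonglongrightarrow> 0) \<longrightarrow>
            lipschitz_12 DD L (Ef P g))"
proof -
  note g0 = hyp_g0[OF hyp]
  define c where "c x = norm x * gb ((norm x)\<^sup>2 / 2)" for x :: "real^'m"
  have cB: "c \<in> borel_measurable borel" unfolding c_def by (rule c_meas[OF hyp])
  have cP: "c \<in> borel_measurable P" unfolding measurable_cong_sets[OF P(2) refl] by (rule cB)
  have c0: "c x \<ge> 0" for x unfolding c_def using gb_nonneg[OF hyp] by simp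
  have lip: "\<bar>fx g x D - fx g x D'\<bar> \<le> c x * norm12 (D - D')" if "D \<in> DD" "D' \<in> DD" for x D D'
    unfolding c_def by (rule fx_lip[OF hyp that])
  have part1: "\<exists>E\<in>sets (sampleM n P).
            E \<subseteq> {X \<in> space (sampleM n P). lipschitz_12 DD L (FX g n X)}
            \<and> measure (sampleM n P) E \<ge> 1 - Lambda_n P gb n L" if L: "L > 0" for L n
  proof -
    let ?M = "sampleM n P"
    interpret M: prob_space ?M by (rule prob_space_PiM) (rule P(1))
    have LXeq: "LX gb n X = (1 / real n) * (\<Sum>i<n. c (X i))" for X unfolding LX_def c_def by simp
    have mLX: "(\<lambda>X. LX gb n X) \<in> borel_measurable ?M"
    proof -
      have ci: "(\<lambda>X. c (X i)) \<in> borel_measurable ?M" if "i \<in> {..<n}" for i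
        by (rule measurable_compose[OF measurable_component_singleton[OF that] cP])
      show ?thesis unfolding LXeq
        by (intro borel_measurable_times borel_measurable_const borel_measurable_sum ci)
    qed
    define S where "S = {X \<in> space ?M. LX gb n X > L}"
    define E where "E = space ?M - S"
    have Ssets: "S \<in> sets ?M" unfolding S_def using mLX by measurable
    have E: "E \<in> sets ?M" unfolding E_def using Ssets by auto
    have lam: "Lambda_n P gb n L = measure ?M S" unfolding Lambda_n_def S_def by simp
    have meas: "measure ?M E = 1 - Lambda_n P gb n L"
      unfolding lam E_def by (rule M.prob_compl[OF Ssets])
    have sub: "E \<subseteq> {X \<in> space ?M. lipschitz_12 DD L (FX g n X)}"
    proof safe
      fix X assume X: "X \<in> E"
      then show "X \<in> space ?M" unfolding E_def by simp
      have XL: "LX gb n X \<le> L" using X unfolding E_def S_def by auto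
      show "lipschitz_12 DD L (FX g n X)" unfolding lipschitz_12_def
      proof (intro ballI)
        fix D D' assume D: "D \<in> DD" "D' \<in> DD"
        have "\<bar>FX g n X D - FX g n X D'\<bar> = (1 / real n) * \<bar>\<Sum>i<n. fx g (X i) D - fx g (X i) D'\<bar>"
          unfolding FX_def by (simp add: sum_subtractf diff_divide_distrib[symmetric] abs_divide)
        also have "\<dots> \<le> (1 / real n) * (\<Sum>i<n. c (X i) * norm12 (D - D'))"
        proof -
          have "\<bar>\<Sum>i<n. fx g (X i) D - fx g (X i) D'\<bar> \<le> (\<Sum>i<n. \<bar>fx g (X i) D - fx g (X i) D'\<bar>)"
            by (rule sum_abs)
          also have "\<dots> \<le> (\<Sum>i<n. c (X i) * norm12 (D - D'))"
            by (rule sum_mono) (rule lip[OF D])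
          finally have s1: "\<bar>\<Sum>i<n. fx g (X i) D - fx g (X i) D'\<bar> \<le> (\<Sum>i<n. c (X i) * norm12 (D - D'))" .
          show ?thesis by (rule mult_left_mono[OF s1]) simp
        qed
        also have "\<dots> = LX gb n X * norm12 (D - D')" unfolding LXeq by (simp add: sum_distrib_right)
        also have "\<dots> \<le> L * norm12 (D - D')"
          by (rule mult_right_mono[OF XL norm12_nonneg])
        finally show "\<bar>FX g n X D - FX g n X D'\<bar> \<le> L * norm12 (D - D')" .
      qed
    qed
    have "E \<subseteq> {X \<in> space ?M. lipschitz_12 DD L (FX g n X)} \<and> measure ?M E \<ge> 1 - Lambda_n P gb n L"
      using sub meas by simp
    then show ?thesis using E by blast
  qed
  have part2: "lipschitz_12 DD L (Ef P g)" if L: "L > enn2real (LPnn P gb)" for L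
  proof -
    have cint: "integrable P c"
      by (rule integrableI_bounded[OF cP]) (use C1 c0 in \<open>simp add: LPnn_def c_def\<close>)
    have "LPnn P gb = ennreal (integral\<^sup>L P c)"
      unfolding LPnn_def c_def[symmetric] by (rule nn_integral_eq_integral[OF cint]) (simp add: c0)
    then have Lc: "integral\<^sup>L P c < L" using L c0 by (simp add: integral_nonneg)
    have L0: "L \<ge> 0" using L by (smt (verit) enn2real_nonneg)
    have fm: "(\<lambda>x. fx g x D) \<in> borel_measurable P" for D
      unfolding measurable_cong_sets[OF P(2) refl] by (rule borel_measurable_continuous_onI[OF fx_cont[OF g0]])
    show ?thesis unfolding lipschitz_12_def
    proof (intro ballI)
      fix D D' assume D: "D \<in> DD" "D' \<in> DD"
      let ?k = "norm12 (D - D')"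
      have lip': "\<bar>fx g x D' - fx g x D\<bar> \<le> c x * ?k" for x using lip[OF D, of x] by simp
      show "\<bar>Ef P g D - Ef P g D'\<bar> \<le> L * ?k"
      proof (cases "integrable P (\<lambda>x. fx g x D)")
        case True
        have i2: "integrable P (\<lambda>x. fx g x D')" by (rule int_transfer[OF True fm cint lip[OF D]])
        have "\<bar>Ef P g D - Ef P g D'\<bar> = \<bar>\<integral>x. fx g x D - fx g x D' \<partial>P\<bar>"
          unfolding Ef_def using True i2 by simp
        also have "\<dots> \<le> (\<integral>x. \<bar>fx g x D - fx g x D'\<bar> \<partial>P)" by (rule integral_abs_bound)
        also have "\<dots> \<le> (\<integral>x. c x * ?k \<partial>P)"
          using True i2 cint by (intro integral_mono lip D) auto
        also have "\<dots> = integral\<^sup>L P c * ?k" by simp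
        also have "\<dots> \<le> L * ?k" using Lc by (intro mult_right_mono norm12_nonneg) simp
        finally show ?thesis .
      next
        case False
        have "\<not> integrable P (\<lambda>x. fx g x D')"
          using int_transfer[OF _ fm cint lip'] False by blast
        then show ?thesis using False L0 unfolding Ef_def
          by (simp add: not_integrable_integral_eq norm12_nonneg)
      qed
    qed
  qed
  show ?thesis using part1 part2 by blast
qed

end
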